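(* Let $\phi$ be a constant Drinfeld $A[\underline{t}_s]$-module of rank $r\ge1$, i.e. $\phi_\theta=\theta+A_1\tau+\dots+A_r\tau^r$ with all $A_i\in\mathbb{C}_\infty$, $A_r\neq0$, and suppose $\lambda_1,\dots,\lambda_r\in\mathbb{C}_\infty$ form an $A$-basis of the kernel of $\exp_\phi:\mathbb{C}_\infty\to\mathbb{C}_\infty$ (the period lattice of $\phi$ viewed as a Drinfeld $A$-module over $\mathbb{C}_\infty$). Then $\lambda_1,\dots,\lambda_r$ form an $A[\underline{t}_s]$-basis of $\Lambda_\phi=\ker(\exp_\phi:\mathbb{T}_s\to\mathbb{T}_s)$.
   Context: $\mathbb{F}_q$ finite field, $\theta,t_1,\dots,t_s$ independent variables, $A=\mathbb{F}_q[\theta]$, $A[\underline{t}_s]=\mathbb{F}_q[\theta,t_1,\dots,t_s]$, $\mathbb{F}_q[\underline{t}_s]=\mathbb{F}_q[t_1,\dots,t_s]$. $\mathbb{C}_\infty$: completion of an algebraic closure of $\mathbb{F}_q((1/\theta))$. $\mathbb{T}_s$: Tate algebra of power series in $t_1,\dots,t_s$ over $\mathbb{C}_\infty$ with coefficients tending to $0$. $\tau$ raises $\mathbb{C}_\infty$-coefficients to the $q$-th power; $\mathbb{T}_s[\tau]$, $\mathbb{T}_s[[\tau]]$ are twisted rings with $\tau f=f^{(1)}\tau$, acting by $\sum a_i\tau^i(f)=\sum a_if^{(i)}$. A Drinfeld $A[\underline{t}_s]$-module is an $\mathbb{F}_q[\underline{t}_s]$-algebra homomorphism $\phi:A[\underline{t}_s]\to\mathbb{T}_s[\tau]$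 with $\phi_\theta=\theta+A_1\tau+\dots+A_r\tau^r$. $\exp_\phi=\sum\alpha_i\tau^i$ is the unique series with $\alpha_0=1$, $\exp_\phi a=\phi_a\exp_\phi$; for constant $\phi$ its coefficients lie in $\mathbb{C}_\infty$ and it converges on $\mathbb{C}_\infty$ and on $\mathbb{T}_s$. *)

theory Defs
  imports "HOL-Computational_Algebra.Computational_Algebra"
begin

definition nonarch_absv :: "('k::field \<Rightarrow> real) \<Rightarrow> bool" where
  "nonarch_absv av \<longleftrightarrow>
     (\<forall>x. av x \<ge> 0) \<and> (\<forall>x. av x = 0 \<longleftrightarrow> x = 0) \<and>
     (\<forall>x y. av (x * y) = av x * av y) \<and>
     (\<forall>x y. av (x + y) \<le> max (av x) (av y))"

definition av_lim :: "('k::field \<Rightarrow> real) \<Rightarrow> (nat \<Rightarrow> 'k) \<Rightarrow> 'k \<Rightarrow> bool" where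
  "av_lim av x L \<longleftrightarrow> (\<forall>e>0. \<exists>N. \<forall>n\<ge>N. av (x n - L) < e)"

definition av_cauchy :: "('k::field \<Rightarrow> real) \<Rightarrow> (nat \<Rightarrow> 'k) \<Rightarrow> bool" where
  "av_cauchy av x \<longleftrightarrow> (\<forall>e>0. \<exists>N. \<forall>m\<ge>N. \<forall>n\<ge>N. av (x m - x n) < e)"

definition Fq :: "nat \<Rightarrow> 'k::field set" where
  "Fq q = {x. x ^ q = x}"

definition Aring :: "nat \<Rightarrow> 'k::field \<Rightarrow> 'k set" where
  "Aring q \<theta> = {poly P \<theta> | P. \<forall>i. coeff P i \<in> Fq q}"

text \<open>(K, av, q, theta) is (isometric, up to a power of the absolute value, to)
  C_infinity: K is a complete algebraically closed non-archimedean valued field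
  of characteristic p, q a power of p, with |theta| > 1, and the elements
  algebraic over F_q(theta) are dense in K.  Any such K is the completion of an
  algebraic closure of F_q((1/theta)).\<close>
definition is_Cinfty :: "('k::field \<Rightarrow> real) \<Rightarrow> nat \<Rightarrow> 'k \<Rightarrow> bool" where
  "is_Cinfty av q \<theta> \<longleftrightarrow>
     (\<exists>p e. prime p \<and> e > 0 \<and> q = p ^ e \<and> of_nat p = (0::'k)) \<and>
     nonarch_absv av \<and> av \<theta> > 1 \<and>
     (\<forall>x. av_cauchy av x \<longrightarrow> (\<exists>L. av_lim av x L)) \<and>
     (\<forall>P::'k poly. degree P > 0 \<longrightarrow> (\<exists>z. poly P z = 0)) \<and>
     (\<forall>z. \<exists>y. av_lim av y z \<and>
        (\<forall>n. \<exists>P::'k poly. P \<noteq> 0 \<and> (\<forall>i. coeff P i \<in> Aring q \<theta>) \<and> poly P (y n) = 0))"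

text \<open>Exponent vectors of monomials t_1^(m 0) ... t_s^(m (s-1)).\<close>
definition exps :: "nat \<Rightarrow> (nat \<Rightarrow> nat) set" where
  "exps s = {m. \<forall>i\<ge>s. m i = 0}"

definition tate :: "('k::field \<Rightarrow> real) \<Rightarrow> nat \<Rightarrow> ((nat \<Rightarrow> nat) \<Rightarrow> 'k) set" where
  "tate av s = {f. (\<forall>m. m \<notin> exps s \<longrightarrow> f m = 0) \<and>
                   (\<forall>e>0. finite {m \<in> exps s. av (f m) \<ge> e})}"

text \<open>Convergence in T_s for the Gauss norm (sup of coefficients).\<close>
definition tate_lim :: "('k::field \<Rightarrow> real) \<Rightarrow> (nat \<Rightarrow> (nat \<Rightarrow> nat) \<Rightarrow> 'k) \<Rightarrow> ((nat \<Rightarrow> nat) \<Rightarrow> 'k) \<Rightarrow> bool" where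
  "tate_lim av g L \<longleftrightarrow> (\<forall>e>0. \<exists>N. \<forall>n\<ge>N. \<forall>m. av (g n m - L m) < e)"

text \<open>Multiplication in T_s (Cauchy product; the index set is finite for
  exponents of finite support).\<close>
definition tmul :: "((nat \<Rightarrow> nat) \<Rightarrow> 'k::field) \<Rightarrow> ((nat \<Rightarrow> nat) \<Rightarrow> 'k) \<Rightarrow> (nat \<Rightarrow> nat) \<Rightarrow> 'k" where
  "tmul f g m = (\<Sum>(m1, m2) \<in> {(m1, m2). \<forall>i. m1 i + m2 i = m i}. f m1 * g m2)"

definition tconst :: "'k::field \<Rightarrow> (nat \<Rightarrow> nat) \<Rightarrow> 'k" where
  "tconst c m = (if m = (\<lambda>_. 0) then c else 0)"

definition Apoly :: "nat \<Rightarrow> 'k::field \<Rightarrow> nat \<Rightarrow> ((nat \<Rightarrow> nat) \<Rightarrow> 'k) set" where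
  "Apoly q \<theta> s = {f. (\<forall>m. m \<notin> exps s \<longrightarrow> f m = 0) \<and> finite {m. f m \<noteq> 0} \<and>
                      (\<forall>m. f m \<in> Aring q \<theta>)}"

text \<open>alpha is the coefficient sequence of exp_phi for phi_theta = theta + sum_{j=1}^r Ac j tau^j:
  alpha 0 = 1 and exp_phi theta = phi_theta exp_phi in C_infinity[[tau]].\<close>
definition is_exp_coeffs :: "nat \<Rightarrow> 'k::field \<Rightarrow> nat \<Rightarrow> (nat \<Rightarrow> 'k) \<Rightarrow> (nat \<Rightarrow> 'k) \<Rightarrow> bool" where
  "is_exp_coeffs q \<theta> r Ac \<alpha> \<longleftrightarrow> \<alpha> 0 = 1 \<and>
     (\<forall>i. \<alpha> i * \<theta> ^ (q ^ i) = \<theta> * \<alpha> i + (\<Sum>j\<in>{1..min r i}. Ac j * \<alpha> (i - j) ^ (q ^ j)))"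

definition exp_ker :: "('k::field \<Rightarrow> real) \<Rightarrow> nat \<Rightarrow> (nat \<Rightarrow> 'k) \<Rightarrow> 'k set" where
  "exp_ker av q \<alpha> = {z. av_lim av (\<lambda>n. \<Sum>i<n. \<alpha> i * z ^ (q ^ i)) 0}"

text \<open>Lambda_phi: kernel of exp_phi on T_s; tau acts on the C_infinity-coefficients.\<close>
definition tate_exp_ker :: "('k::field \<Rightarrow> real) \<Rightarrow> nat \<Rightarrow> nat \<Rightarrow> (nat \<Rightarrow> 'k) \<Rightarrow> ((nat \<Rightarrow> nat) \<Rightarrow> 'k) set" where
  "tate_exp_ker av q s \<alpha> = {f \<in> tate av s.
      tate_lim av (\<lambda>n m. \<Sum>i<n. \<alpha> i * f m ^ (q ^ i)) (\<lambda>_. 0)}"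

end

theory Submission
  imports Defs
begin

lemma av_basic:
  assumes "nonarch_absv av"
  shows av0: "av 0 = 0" and av_nn: "av x \<ge> 0" and av_mult: "av (x * y) = av x * av y"
    and av_add: "av (x + y) \<le> max (av x) (av y)" and av1: "av 1 = 1"
    and av_minus: "av (- x) = av x" and av_pow: "av (x ^ n) = av x ^ n"
    and av_diff: "av (x - y) \<le> max (av x) (av y)"
proof -
  have m: "\<And>x y. av (x * y) = av x * av y" and nn: "\<And>x. av x \<ge> 0"
    and z: "\<And>x. av x = 0 \<longleftrightarrow> x = 0" and ad: "\<And>x y. av (x + y) \<le> max (av x) (av y)"
    using assms unfolding nonarch_absv_def by auto
  show "av 0 = 0" "av x \<ge> 0" "av (x * y) = av x * av y" "av (x + y) \<le> max (av x) (av y)"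
    using m nn z ad by auto
  have "av 1 = av 1 * av 1" using m[of 1 1] by simp
  moreover have "av 1 \<noteq> 0" using z[of 1] by simp
  ultimately show one: "av 1 = 1" by simp
  have "av (-1) * av (-1) = 1" using m[of "-1" "-1"] one by simp
  moreover have "av (-1) \<ge> 0" using nn by simp
  ultimately have "av (-1) ^ 2 = 1" "av (-1) \<ge> 0" by (simp_all add: power2_eq_square)
  hence "av (-1) = 1" using power2_eq_1_iff by force
  then have mi: "\<And>z. av (- z) = av z" using m[of "-1"] by simp
  then show "av (- x) = av x" by simp
  show "av (x ^ n) = av x ^ n" by (induction n) (auto simp: one m)
  show "av (x - y) \<le> max (av x) (av y)" using ad[of x "-y"] mi[of y] by simp
qed

lemma av_strict:
  assumes "nonarch_absv av" "av y < av x"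
  shows "av (x + y) = av x"
proof -
  have "av (x + y) \<le> max (av x) (av y)" using av_add[OF assms(1)] .
  moreover have "av x \<le> max (av (x + y)) (av (- y))"
    using av_add[OF assms(1), of "x + y" "-y"] by simp
  ultimately show ?thesis using assms av_minus[OF assms(1), of y] by (auto simp: max_def split: if_splits)
qed

lemma av_sum:
  assumes "nonarch_absv av" "finite F" "0 \<le> B" "\<forall>j\<in>F. av (g j) \<le> B"
  shows "av (sum g F) \<le> B"
  using assms(2,4)
proof (induction F rule: finite_induct)
  case empty then show ?case using av0[OF assms(1)] assms(3) by simp
next
  case (insert x F)
  then have "max (av (g x)) (av (sum g F)) \<le> B" by simp
  then have "av (g x + sum g F) \<le> B" using av_add[OF assms(1), of "g x" "sum g F"] by linarith
  then show ?case using insert(1,2) by simp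
qed

lemma alpha_bound:
  assumes nav: "nonarch_absv av" and th: "av \<theta> > 1" and q: "q \<ge> 2"
    and ex: "is_exp_coeffs q \<theta> r Ac \<alpha>" and C: "C \<ge> 1" and AC: "\<forall>j\<in>{1..r}. av (Ac j) \<le> C"
  shows "av (\<alpha> i) \<le> C ^ (q ^ i - 1)"
proof (induction i rule: less_induct)
  case (less i)
  show ?case
  proof (cases "i = 0")
    case True
    then show ?thesis using ex av1[OF nav] unfolding is_exp_coeffs_def by simp
  next
    case False
    define S where "S = (\<Sum>j\<in>{1..min r i}. Ac j * \<alpha> (i - j) ^ (q ^ j))"
    have eq: "\<alpha> i * \<theta> ^ (q ^ i) = \<theta> * \<alpha> i + S" using ex unfolding is_exp_coeffs_def S_def by blast
    hence eq2: "\<alpha> i * (\<theta> ^ (q ^ i) - \<theta>) = S" by (simp add: algebra_simps)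
    have "q ^ 1 \<le> q ^ i" using q False by (intro power_increasing) auto
    hence qi: "q ^ i \<ge> 2" using q by simp
    have "av \<theta> ^ 1 < av \<theta> ^ (q ^ i)"
      using th qi by (intro power_strict_increasing) auto
    hence "av (- \<theta>) < av (\<theta> ^ (q ^ i))" using av_minus[OF nav] av_pow[OF nav] by simp
    hence ath: "av (\<theta> ^ (q ^ i) - \<theta>) = av \<theta> ^ (q ^ i)"
      using av_strict[OF nav] av_pow[OF nav] by (metis diff_conv_add_uminus)
    have Cnn: "C \<ge> 0" using C by simp
    have "av S \<le> C ^ (q ^ i - 1)"
      unfolding S_def
    proof (rule av_sum[OF nav])
      show "0 \<le> C ^ (q ^ i - 1)" using Cnn by simp
      show "\<forall>j\<in>{1..min r i}. av (Ac j * \<alpha> (i - j) ^ q ^ j) \<le> C ^ (q ^ i - 1)"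
      proof
        fix j assume j: "j \<in> {1..min r i}"
        have ih: "av (\<alpha> (i - j)) \<le> C ^ (q ^ (i - j) - 1)" using less j by auto
        have "q ^ 1 \<le> q ^ j" using q j by (intro power_increasing) auto
        hence qj: "q ^ j \<ge> 2" using q by simp
        have qji: "q ^ j \<le> q ^ i" using j q by (intro power_increasing) auto
        have pw: "q ^ (i - j) * q ^ j = q ^ i" using j by (simp add: power_add[symmetric])
        have "av (Ac j * \<alpha> (i - j) ^ q ^ j) = av (Ac j) * av (\<alpha> (i - j)) ^ q ^ j"
          using av_mult[OF nav] av_pow[OF nav] by simp
        also have "\<dots> \<le> C * (C ^ (q ^ (i - j) - 1)) ^ q ^ j"
          using AC j ih av_nn[OF nav] Cnn by (intro mult_mono power_mono) auto
        also have "\<dots> = C ^ (1 + (q ^ (i - j) - 1) * q ^ j)" by (simp add: power_mult power_add)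
        also have "(q ^ (i - j) - 1) * q ^ j = q ^ i - q ^ j" using pw by (simp add: diff_mult_distrib)
        also have "C ^ (1 + (q ^ i - q ^ j)) \<le> C ^ (q ^ i - 1)"
          using C qj qji by (intro power_increasing) auto
        finally show "av (Ac j * \<alpha> (i - j) ^ q ^ j) \<le> C ^ (q ^ i - 1)" .
      qed
    qed simp
    hence "av (\<alpha> i) * av \<theta> ^ (q ^ i) \<le> C ^ (q ^ i - 1)"
      using eq2 ath av_mult[OF nav] by metis
    moreover have "av (\<alpha> i) \<le> av (\<alpha> i) * av \<theta> ^ (q ^ i)"
      using th av_nn[OF nav, of "\<alpha> i"]
      by (simp add: mult_le_cancel_left1 one_le_power)
    ultimately show ?thesis by linarith
  qed
qed


lemma exp_partial_norm:
  assumes nav: "nonarch_absv av" and q: "q \<ge> 2" and a0: "\<alpha> 0 = 1"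
    and ab: "\<forall>i. av (\<alpha> i) \<le> C ^ (q ^ i - 1)" and C: "C \<ge> 1"
    and z: "z \<noteq> 0" and small: "C * av z < 1"
  shows "av (\<Sum>i<Suc n. \<alpha> i * z ^ (q ^ i)) = av z"
proof (induction n)
  case 0
  then show ?case using a0 by simp
next
  case (Suc n)
  have azpos: "av z > 0" using nav z unfolding nonarch_absv_def by (metis less_eq_real_def)
  define k where "k = q ^ Suc n - 1"
  have "q ^ 1 \<le> q ^ Suc n" using q by (intro power_increasing) auto
  hence q2: "q ^ Suc n \<ge> 2" using q by (simp only: power_one_right)
  hence qk: "q ^ Suc n = Suc k" and k1: "k \<ge> 1" unfolding k_def by linarith+
  have Cz0: "C * av z \<ge> 0" using C azpos by simp
  have "av (\<alpha> (Suc n) * z ^ (q ^ Suc n)) = av (\<alpha> (Suc n)) * av z ^ Suc k"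
    using av_mult[OF nav] av_pow[OF nav] qk by simp
  also have "\<dots> \<le> C ^ k * av z ^ Suc k"
    using ab[rule_format, of "Suc n"] azpos unfolding k_def by (intro mult_right_mono) auto
  also have "\<dots> = (C * av z) ^ k * av z" by (simp add: power_mult_distrib)
  also have "\<dots> < 1 * av z"
    using azpos small Cz0 k1 by (intro mult_strict_right_mono) (auto simp: power_less_one_iff)
  finally have lt: "av (\<alpha> (Suc n) * z ^ (q ^ Suc n)) < av (\<Sum>i<Suc n. \<alpha> i * z ^ (q ^ i))"
    using Suc by simp
  show ?case using av_strict[OF nav lt] Suc by simp
qed

lemma ker_discrete:
  assumes nav: "nonarch_absv av" and q: "q \<ge> 2" and a0: "\<alpha> 0 = 1"
    and ab: "\<forall>i. av (\<alpha> i) \<le> C ^ (q ^ i - 1)" and C: "C \<ge> 1"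
    and zk: "z \<in> exp_ker av q \<alpha>" and z: "z \<noteq> 0"
  shows "1 / C \<le> av z"
proof (rule ccontr)
  assume "\<not> 1 / C \<le> av z"
  hence small: "C * av z < 1" using C by (simp add: field_simps)
  have azpos: "av z > 0" using nav z unfolding nonarch_absv_def by (metis less_eq_real_def)
  obtain N where N: "\<forall>n\<ge>N. av ((\<Sum>i<n. \<alpha> i * z ^ (q ^ i)) - 0) < av z"
    using zk azpos unfolding exp_ker_def av_lim_def by blast
  have "av ((\<Sum>i<Suc N. \<alpha> i * z ^ (q ^ i)) - 0) < av z" by (rule N[rule_format]) simp
  moreover have "av (\<Sum>i<Suc N. \<alpha> i * z ^ (q ^ i)) = av z"
    by (rule exp_partial_norm[OF nav q a0 ab C z small])
  ultimately show False by simp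
qed

lemma finite_bounded_funs:
  assumes "m \<in> exps s"
  shows "finite {g :: nat \<Rightarrow> nat. \<forall>i. g i \<le> m i}"
proof -
  define K where "K = (\<Sum>i<s. m i)"
  define F where "F = (\<lambda>(l :: nat list) (i :: nat). if i < s then l ! i else 0)"
  have "{g :: nat \<Rightarrow> nat. \<forall>i. g i \<le> m i} \<subseteq> F ` {l. set l \<subseteq> {..K} \<and> length l = s}"
  proof
    fix g :: "nat \<Rightarrow> nat" assume g: "g \<in> {g. \<forall>i. g i \<le> m i}"
    have "g = F (map g [0..<s])"
    proof
      fix i show "g i = F (map g [0..<s]) i"
        using g assms unfolding F_def exps_def by (cases "i < s") (auto, metis le_zero_eq not_le)
    qed
    moreover have "set (map g [0..<s]) \<subseteq> {..K}"
    proof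
      fix x assume "x \<in> set (map g [0..<s])"
      then obtain i where i: "i < s" "x = g i" by auto
      have "m i \<le> K" unfolding K_def using i by (intro member_le_sum) auto
      then show "x \<in> {..K}" using g i by (auto intro: order_trans)
    qed
    ultimately show "g \<in> F ` {l. set l \<subseteq> {..K} \<and> length l = s}" by force
  qed
  moreover have "finite (F ` {l. set l \<subseteq> {..K} \<and> length l = s})"
    by (intro finite_imageI finite_lists_length_eq) auto
  ultimately show ?thesis by (rule finite_subset)
qed

lemma tmul_tconst_fin:
  assumes "finite {(m1, m2). \<forall>i. m1 i + m2 i = (m :: nat \<Rightarrow> nat) i}"
  shows "tmul f (tconst c) m = f m * c"
proof -
  let ?S = "{(m1, m2). \<forall>i. m1 i + m2 i = (m :: nat \<Rightarrow> nat) i}"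
  have "tmul f (tconst c) m = (\<Sum>p\<in>?S. if p = (m, \<lambda>_. 0) then f m * c else 0)"
    unfolding tmul_def
  proof (rule sum.cong[OF refl])
    fix p assume p: "p \<in> ?S"
    obtain m1 m2 where pp: "p = (m1, m2)" by (cases p)
    show "(case p of (m1, m2) \<Rightarrow> f m1 * tconst c m2) = (if p = (m, \<lambda>_. 0) then f m * c else 0)"
    proof (cases "m2 = (\<lambda>_. 0)")
      case True
      then have "m1 = m" using p pp by auto
      then show ?thesis using True pp by (simp add: tconst_def)
    next
      case False
      then show ?thesis using pp by (simp add: tconst_def)
    qed
  qed
  also have "\<dots> = f m * c" using assms by (simp add: sum.delta')
  finally show ?thesis .
qed

lemma tmul_apoly:
  assumes "\<forall>m. m \<notin> exps s \<longrightarrow> g m = 0"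
  shows "tmul g (tconst c) m = g m * c"
proof (cases "m \<in> exps s")
  case True
  have "{(m1, m2). \<forall>i. m1 i + m2 i = m i} \<subseteq> {g. \<forall>i. g i \<le> m i} \<times> {g. \<forall>i. g i \<le> m i}"
    by (auto, metis le_add1, metis le_add2)
  then have "finite {(m1, m2). \<forall>i. m1 i + m2 i = m i}"
    using finite_bounded_funs[OF True] by (meson finite_SigmaI finite_subset)
  then show ?thesis by (rule tmul_tconst_fin)
next
  case False
  then have g0: "g m = 0" using assms by simp
  show ?thesis
  proof (cases "finite {(m1, m2). \<forall>i. m1 i + m2 i = m i}")
    case True then show ?thesis by (rule tmul_tconst_fin)
  next
    case False then show ?thesis using g0 unfolding tmul_def by simp
  qed
qed

theorem corollary8p3:
  fixes av :: "'k::field \<Rightarrow> real" and q :: nat and \<theta> :: 'k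
    and s r :: nat and Ac :: "nat \<Rightarrow> 'k" and \<alpha> :: "nat \<Rightarrow> 'k" and lam :: "nat \<Rightarrow> 'k"
  assumes Cinf: "is_Cinfty av q \<theta>"
    and r: "r \<ge> 1" and Ar: "Ac r \<noteq> 0"
    and exp: "is_exp_coeffs q \<theta> r Ac \<alpha>"
    and lam_ker: "\<forall>i\<in>{1..r}. lam i \<in> exp_ker av q \<alpha>"
    and lam_span: "\<forall>z\<in>exp_ker av q \<alpha>. \<exists>a. (\<forall>i\<in>{1..r}. a i \<in> Aring q \<theta>) \<and>
                      z = (\<Sum>i=1..r. a i * lam i)"
    and lam_indep: "\<forall>a. (\<forall>i\<in>{1..r}. a i \<in> Aring q \<theta>) \<and> (\<Sum>i=1..r. a i * lam i) = 0
                      \<longrightarrow> (\<forall>i\<in>{1..r}. a i = 0)"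
  shows "(\<forall>i\<in>{1..r}. tconst (lam i) \<in> tate_exp_ker av q s \<alpha>) \<and>
         (\<forall>f\<in>tate_exp_ker av q s \<alpha>. \<exists>a. (\<forall>i\<in>{1..r}. a i \<in> Apoly q \<theta> s) \<and>
             f = (\<lambda>m. \<Sum>i=1..r. tmul (a i) (tconst (lam i)) m)) \<and>
         (\<forall>a. (\<forall>i\<in>{1..r}. a i \<in> Apoly q \<theta> s) \<and>
             (\<lambda>m. \<Sum>i=1..r. tmul (a i) (tconst (lam i)) m) = (\<lambda>_. 0)
             \<longrightarrow> (\<forall>i\<in>{1..r}. a i = (\<lambda>_. 0)))"
proof -
  have nav: "nonarch_absv av" and th: "av \<theta> > 1" using Cinf unfolding is_Cinfty_def by auto
  obtain p e where pe: "prime p" "e > 0" "q = p ^ e" using Cinf unfolding is_Cinfty_def by auto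
  have "p ^ 1 \<le> p ^ e" using pe prime_gt_1_nat[OF pe(1)] by (intro power_increasing) auto
  hence q: "q \<ge> 2" using pe prime_ge_2_nat[OF pe(1)] by simp
  have a0: "\<alpha> 0 = 1" using exp unfolding is_exp_coeffs_def by simp
  define C where "C = 1 + (\<Sum>j=1..r. av (Ac j))"
  have AC: "\<forall>j\<in>{1..r}. av (Ac j) \<le> C"
  proof
    fix j assume "j \<in> {1..r}"
    then have "av (Ac j) \<le> (\<Sum>j=1..r. av (Ac j))"
      by (intro member_le_sum) (auto simp: av_nn[OF nav])
    then show "av (Ac j) \<le> C" unfolding C_def by simp
  qed
  have C: "C \<ge> 1" unfolding C_def using av_nn[OF nav] by (simp add: sum_nonneg)
  have ab: "\<forall>i. av (\<alpha> i) \<le> C ^ (q ^ i - 1)"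
    using alpha_bound[OF nav th q exp C AC] by blast
  have disc: "\<And>z. z \<in> exp_ker av q \<alpha> \<Longrightarrow> z \<noteq> 0 \<Longrightarrow> 1 / C \<le> av z"
    using ker_discrete[OF nav q a0 ab C] by blast
  have qpos: "\<And>i. q ^ i > 0" using q by simp
  have z0: "\<And>k. (0::'k) ^ (q ^ k) = 0" using qpos by (simp add: zero_power)
  have zero_exps: "(\<lambda>_. 0) \<in> exps s" unfolding exps_def by simp
  have A0: "0 \<in> Aring q \<theta>"
  proof -
    have "poly 0 \<theta> = 0" by simp
    moreover have "\<forall>i. coeff (0::'k poly) i \<in> Fq q" unfolding Fq_def using q by simp
    ultimately show ?thesis unfolding Aring_def
      by (intro CollectI exI[of _ "0::'k poly"]) simp
  qed
  have P1: "\<forall>i\<in>{1..r}. tconst (lam i) \<in> tate_exp_ker av q s \<alpha>"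
  proof
    fix i assume i: "i \<in> {1..r}"
    have "tconst (lam i) \<in> tate av s"
      unfolding tate_def
    proof (intro CollectI conjI allI impI)
      fix m :: "nat \<Rightarrow> nat" assume "m \<notin> exps s"
      then show "tconst (lam i) m = 0" using zero_exps unfolding tconst_def by auto
    next
      fix e :: real assume e: "e > 0"
      have "{m \<in> exps s. e \<le> av (tconst (lam i) m)} \<subseteq> {\<lambda>_. 0}"
        using e av0[OF nav] unfolding tconst_def by auto
      then show "finite {m \<in> exps s. e \<le> av (tconst (lam i) m)}" by (rule finite_subset) simp
    qed
    moreover have "tate_lim av (\<lambda>n m. \<Sum>k<n. \<alpha> k * tconst (lam i) m ^ (q ^ k)) (\<lambda>_. 0)"
      unfolding tate_lim_def
    proof (intro allI impI)
      fix e :: real assume e: "e > 0"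
      obtain N where N: "\<forall>n\<ge>N. av ((\<Sum>k<n. \<alpha> k * lam i ^ (q ^ k)) - 0) < e"
        using lam_ker i e unfolding exp_ker_def av_lim_def by blast
      show "\<exists>N. \<forall>n\<ge>N. \<forall>m. av ((\<Sum>k<n. \<alpha> k * tconst (lam i) m ^ (q ^ k)) - 0) < e"
      proof (intro exI allI impI)
        fix n m assume n: "N \<le> n"
        show "av ((\<Sum>k<n. \<alpha> k * tconst (lam i) m ^ (q ^ k)) - 0) < e"
        proof (cases "m = (\<lambda>_. 0)")
          case True then show ?thesis using N n unfolding tconst_def by simp
        next
          case False
          then have "(\<Sum>k<n. \<alpha> k * tconst (lam i) m ^ (q ^ k)) = 0"
            unfolding tconst_def by (simp only: if_False z0 mult_zero_right sum.neutral_const)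
          then show ?thesis using e av0[OF nav] by simp
        qed
      qed
    qed
    ultimately show "tconst (lam i) \<in> tate_exp_ker av q s \<alpha>" unfolding tate_exp_ker_def mem_Collect_eq by (rule conjI)
  qed
  have P2: "\<forall>f\<in>tate_exp_ker av q s \<alpha>. \<exists>a. (\<forall>i\<in>{1..r}. a i \<in> Apoly q \<theta> s) \<and>
             f = (\<lambda>m. \<Sum>i=1..r. tmul (a i) (tconst (lam i)) m)"
  proof
    fix f assume f: "f \<in> tate_exp_ker av q s \<alpha>"
    have ft: "f \<in> tate av s" using f unfolding tate_exp_ker_def by blast
    have fsupp: "\<And>m. m \<notin> exps s \<Longrightarrow> f m = 0" using ft unfolding tate_def by blast
    have ffin: "\<And>e. e > 0 \<Longrightarrow> finite {m \<in> exps s. e \<le> av (f m)}" using ft unfolding tate_def by blast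
    have fker: "f m \<in> exp_ker av q \<alpha>" for m
    proof -
      have tl: "tate_lim av (\<lambda>n m. \<Sum>i<n. \<alpha> i * f m ^ (q ^ i)) (\<lambda>_. 0)"
        using f unfolding tate_exp_ker_def by blast
      show ?thesis unfolding exp_ker_def av_lim_def
      proof (intro CollectI allI impI)
        fix e :: real assume "e > 0"
        then obtain N where "\<forall>n\<ge>N. \<forall>m. av ((\<Sum>i<n. \<alpha> i * f m ^ (q ^ i)) - 0) < e"
          using tl unfolding tate_lim_def by blast
        then show "\<exists>N. \<forall>n\<ge>N. av ((\<Sum>i<n. \<alpha> i * f m ^ (q ^ i)) - 0) < e" by blast
      qed
    qed
    define cf where "cf m = (if f m = 0 then (\<lambda>_. 0) else (SOME a. (\<forall>i\<in>{1..r}. a i \<in> Aring q \<theta>) \<and> f m = (\<Sum>i=1..r. a i * lam i)))" for m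
    have cfp: "(\<forall>i\<in>{1..r}. cf m i \<in> Aring q \<theta>) \<and> f m = (\<Sum>i=1..r. cf m i * lam i)" for m
    proof (cases "f m = 0")
      case True then show ?thesis using A0 unfolding cf_def by simp
    next
      case False
      have "\<exists>a. (\<forall>i\<in>{1..r}. a i \<in> Aring q \<theta>) \<and> f m = (\<Sum>i=1..r. a i * lam i)"
        using lam_span fker by blast
      then have "(\<lambda>a. (\<forall>i\<in>{1..r}. a i \<in> Aring q \<theta>) \<and> f m = (\<Sum>i=1..r. a i * lam i))
          (SOME a. (\<forall>i\<in>{1..r}. a i \<in> Aring q \<theta>) \<and> f m = (\<Sum>i=1..r. a i * lam i))"
        by (rule someI_ex)
      then show ?thesis using False unfolding cf_def by simp
    qed
    have cf0: "f m = 0 \<Longrightarrow> cf m i = 0" for m i unfolding cf_def by simp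
    define a where "a i m = cf m i" for i m
    have asupp: "\<forall>m. m \<notin> exps s \<longrightarrow> a i m = 0" for i using fsupp cf0 unfolding a_def by simp
    have Ca: "1 / C > 0" using C by simp
    have "(\<forall>i\<in>{1..r}. a i \<in> Apoly q \<theta> s)"
    proof
      fix i assume i: "i \<in> {1..r}"
      have "{m. a i m \<noteq> 0} \<subseteq> {m \<in> exps s. 1 / C \<le> av (f m)}"
      proof
        fix m assume "m \<in> {m. a i m \<noteq> 0}"
        then have fm: "f m \<noteq> 0" using cf0 unfolding a_def by auto
        then have "m \<in> exps s" using fsupp by blast
        then show "m \<in> {m \<in> exps s. 1 / C \<le> av (f m)}" using disc[OF fker fm] by simp
      qed
      then have "finite {m. a i m \<noteq> 0}" using ffin[OF Ca] by (rule finite_subset)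
      moreover have "\<forall>m. a i m \<in> Aring q \<theta>" using cfp i unfolding a_def by blast
      ultimately show "a i \<in> Apoly q \<theta> s" unfolding Apoly_def using asupp[of i] by blast
    qed
    moreover have "f = (\<lambda>m. \<Sum>i=1..r. tmul (a i) (tconst (lam i)) m)"
    proof
      fix m
      show "f m = (\<Sum>i=1..r. tmul (a i) (tconst (lam i)) m)"
        using cfp[of m] tmul_apoly[OF asupp] unfolding a_def by simp
    qed
    ultimately show "\<exists>a. (\<forall>i\<in>{1..r}. a i \<in> Apoly q \<theta> s) \<and>
             f = (\<lambda>m. \<Sum>i=1..r. tmul (a i) (tconst (lam i)) m)" by (intro exI[of _ a] conjI)
  qed
  have P3: "\<forall>a. (\<forall>i\<in>{1..r}. a i \<in> Apoly q \<theta> s) \<and>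
             (\<lambda>m. \<Sum>i=1..r. tmul (a i) (tconst (lam i)) m) = (\<lambda>_. 0)
             \<longrightarrow> (\<forall>i\<in>{1..r}. a i = (\<lambda>_. 0))"
  proof (intro allI impI ballI)
    fix a :: "nat \<Rightarrow> (nat \<Rightarrow> nat) \<Rightarrow> 'k" and i
    assume H: "(\<forall>i\<in>{1..r}. a i \<in> Apoly q \<theta> s) \<and>
             (\<lambda>m. \<Sum>i=1..r. tmul (a i) (tconst (lam i)) m) = (\<lambda>_. 0)"
      and i: "i \<in> {1..r}"
    show "a i = (\<lambda>_. 0)"
    proof
      fix m
      have "(\<Sum>j=1..r. tmul (a j) (tconst (lam j)) m) = 0" using fun_cong[OF conjunct2[OF H], of m] by (simp only:)
      moreover have "(\<Sum>j=1..r. tmul (a j) (tconst (lam j)) m) = (\<Sum>j=1..r. a j m * lam j)"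
      proof (rule sum.cong[OF refl])
        fix j assume "j \<in> {1..r}"
        then have "a j \<in> Apoly q \<theta> s" using conjunct1[OF H] by blast
        then have "\<forall>m. m \<notin> exps s \<longrightarrow> a j m = 0" unfolding Apoly_def by blast
        then show "tmul (a j) (tconst (lam j)) m = a j m * lam j" by (rule tmul_apoly)
      qed
      moreover have "\<forall>j\<in>{1..r}. a j m \<in> Aring q \<theta>" using conjunct1[OF H] unfolding Apoly_def by blast
      ultimately have "(\<forall>j\<in>{1..r}. a j m \<in> Aring q \<theta>) \<and> (\<Sum>j=1..r. a j m * lam j) = 0"
        by (simp only:)
      then have "\<forall>j\<in>{1..r}. a j m = 0" by (rule mp[OF lam_indep[THEN spec, of "\<lambda>j. a j m"]])
      then show "a i m = 0" using i by blast
    qed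
  qed
  show ?thesis by (rule conjI[OF P1 conjI[OF P2 P3]])
qed

end
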